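(* For every $m\in\mathbb{N}$ and every $0<\varepsilon<1$, the set $E_\varepsilon$ is a convex subset of $\mathbb{C}^m$.
   Context: For $m\in\mathbb{N}$ let $\xi_j=e^{(2j-1)\pi i/m}$, $j=1,\dots,m$ (the $m$-th roots of $-1$ in counterclockwise order), with $\xi_{m+1}:=\xi_1$. For $\varepsilon>0$ define \[E_\varepsilon=\Big\{(r_1,\dots,r_m)\in\prod_{j=1}^m\exp(\overline{D}(0,\varepsilon)) : \tfrac{r_{j+1}\xi_{j+1}-r_j\xi_j}{\xi_{j+1}-\xi_j}\in\exp(\overline{D}(0,\varepsilon)),\ 1\le j\le m\Big\},\] with $r_{m+1}:=r_1$, where $\exp(\overline D(0,\varepsilon))=\{e^{u}:|u|\le\varepsilon\}$. *)

theory Defs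
  imports "HOL-Analysis.Analysis"
begin

text \<open>Points of C^m are represented as functions r :: nat \<Rightarrow> complex, with coordinate
  r j (0-based, j < m) standing for the paper's r_(j+1); coordinates j \<ge> m are required to be 0.\<close>

definition expDisc :: "real \<Rightarrow> complex set" where
  "expDisc \<epsilon> = exp ` cball 0 \<epsilon>"

text \<open>xi m j = e^((2(j+1)-1) pi i / m), the paper's xi_(j+1); indices are taken mod m.\<close>
definition xi :: "nat \<Rightarrow> nat \<Rightarrow> complex" where
  "xi m j = exp (complex_of_real ((2 * real (j mod m) + 1) * pi / real m) * \<i>)"

definition E_set :: "nat \<Rightarrow> real \<Rightarrow> (nat \<Rightarrow> complex) set" where
  "E_set m \<epsilon> = {r. (\<forall>j\<ge>m. r j = 0) \<and> (\<forall>j<m. r j \<in> expDisc \<epsilon>) \<and>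
     (\<forall>j<m. (r ((j+1) mod m) * xi m (j+1) - r j * xi m j) / (xi m (j+1) - xi m j) \<in> expDisc \<epsilon>)}"

definition convex_Cm :: "(nat \<Rightarrow> complex) set \<Rightarrow> bool" where
  "convex_Cm S \<longleftrightarrow> (\<forall>x\<in>S. \<forall>y\<in>S. \<forall>u::real. \<forall>v::real. 0 \<le> u \<longrightarrow> 0 \<le> v \<longrightarrow> u + v = 1 \<longrightarrow>
     (\<lambda>j. of_real u * x j + of_real v * y j) \<in> S)"

end

theory Submission
  imports Defs
begin


lemma cos_ge_quad: "1 - y^2/2 \<le> cos (y::real)"
proof -
  have "cos y = 1 - 2 * sin (y/2) ^ 2" using cos_double_sin[of "y/2"] by simp
  moreover have "sin (y/2)^2 \<le> (y/2)^2"
    using abs_sin_x_le_abs_x[of "y/2"] by (metis abs_ge_zero power2_le_iff_abs_le abs_le_square_iff)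
  ultimately show ?thesis by (simp add: power_divide)
qed

lemma exp_neg_le: assumes "0 \<le> (d::real)" shows "exp (-d) \<le> 1 - d + d^2/2"
proof -
  have h: "1 + d + d^2/2 \<le> exp d" by (rule exp_lower_Taylor_quadratic[OF assms])
  have p: "0 < 1 + d + d^2/2" using assms by (simp add: add_pos_nonneg)
  have "(1 + d + d^2/2) * (1 - d + d^2/2) = 1 + d^4/4" by (simp add: algebra_simps power2_eq_square power4_eq_xxxx)
  hence "1 \<le> (1 + d + d^2/2) * (1 - d + d^2/2)" by simp
  hence "1 \<le> exp d * (1 - d + d^2/2)"
  proof -
    have q: "0 \<le> 1 - d + d^2/2" proof -
      have eq: "1 - d + d^2/2 = ((d-1)^2 + 1)/2" by (simp add: power2_eq_square field_simps)
      have "0 \<le> ((d-1)^2 + 1)/2" by simp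
      with eq show ?thesis by linarith
    qed
    have "(1 + d + d^2/2) * (1 - d + d^2/2) \<le> exp d * (1 - d + d^2/2)" by (rule mult_right_mono[OF h q])
    with \<open>1 \<le> _\<close> show ?thesis by linarith
  qed
  thus ?thesis by (simp add: exp_minus field_simps)
qed

lemma Re_exp_ge:
  fixes a :: complex assumes "cmod a \<le> \<epsilon>" "\<epsilon> < 1"
  shows "exp (-1) \<le> Re (exp a)"
proof -
  define x where "x = Re a"
  define y where "y = Im a"
  have xy: "x^2 + y^2 < 1"
  proof -
    have "x^2 + y^2 = (cmod a)^2" by (simp add: x_def y_def cmod_power2)
    also have "\<dots> < 1" using assms by (simp add: abs_square_less_1)
    finally show ?thesis .
  qed
  define c where "c = sqrt (1 - y^2)"
  have y1: "y^2 \<le> 1" using xy zero_le_power2[of x] by linarith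
  have c0: "0 \<le> c" "c \<le> 1" using y1 by (auto simp: c_def)
  have c2: "c^2 = 1 - y^2" using y1 by (simp add: c_def)
  have "x^2 \<le> c^2" using xy c2 by simp
  hence xc: "-c \<le> x" using c0 power2_le_iff_abs_le[of c x] by linarith
  have "exp (c - 1) \<le> 1 - (1-c) + (1-c)^2/2" using exp_neg_le[of "1-c"] c0 by simp
  also have "\<dots> = (1 + c^2)/2" by (simp add: power2_diff field_simps)
  also have "\<dots> = 1 - y^2/2" using c2 by simp
  also have "\<dots> \<le> cos y" by (rule cos_ge_quad)
  finally have cy: "exp (c-1) \<le> cos y" .
  have "exp (-1) = exp (-c) * exp (c - 1)" by (simp add: exp_add[symmetric])
  also have "\<dots> \<le> exp x * cos y"
    by (rule mult_mono) (use xc cy in auto)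
  also have "\<dots> = Re (exp a)" by (simp add: Re_exp x_def y_def)
  finally show ?thesis .
qed



lemma derivs:
  fixes x1 x2 d1 d2 s :: real
  assumes X: "0 < x1 + s*d1"
  shows "((\<lambda>s. ln ((x1 + s*d1)^2 + (x2 + s*d2)^2)/2) has_real_derivative
      ((x1+s*d1)*d1 + (x2+s*d2)*d2)/((x1 + s*d1)^2 + (x2 + s*d2)^2)) (at s)"
   and "((\<lambda>s. arctan ((x2 + s*d2)/(x1 + s*d1))) has_real_derivative
      ((x1+s*d1)*d2 - (x2+s*d2)*d1)/((x1 + s*d1)^2 + (x2 + s*d2)^2)) (at s)"
proof -
  have N: "0 < (x1 + s*d1)^2 + (x2 + s*d2)^2" using X by (simp add: add_pos_nonneg)
  have eq2: "\<And>P N::real. 2 * P / N / 2 = P / N" by simp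
  have X': "x1 + s*d1 \<noteq> 0" using X by simp
  show "((\<lambda>s. ln ((x1 + s*d1)^2 + (x2 + s*d2)^2)/2) has_real_derivative
      ((x1+s*d1)*d1 + (x2+s*d2)*d2)/((x1 + s*d1)^2 + (x2 + s*d2)^2)) (at s)"
  proof -
    have "((\<lambda>s. ln ((x1 + s*d1)^2 + (x2 + s*d2)^2)) has_real_derivative
      2*((x1+s*d1)*d1 + (x2+s*d2)*d2)/((x1 + s*d1)^2 + (x2 + s*d2)^2)) (at s)"
      using N by (auto intro!: derivative_eq_intros simp: field_simps power2_eq_square)
    from DERIV_cdivide[OF this, of 2] show ?thesis
      by (rule DERIV_cong) (rule eq2)
  qed
  show "((\<lambda>s. arctan ((x2 + s*d2)/(x1 + s*d1))) has_real_derivative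
      ((x1+s*d1)*d2 - (x2+s*d2)*d1)/((x1 + s*d1)^2 + (x2 + s*d2)^2)) (at s)"
  proof -
    have dY: "((\<lambda>s. x2 + s*d2) has_real_derivative d2) (at s)"
      using DERIV_add[OF DERIV_const[of x2] DERIV_cmult_right[OF DERIV_ident, of d2]] by simp
    have dX: "((\<lambda>s. x1 + s*d1) has_real_derivative d1) (at s)"
      using DERIV_add[OF DERIV_const[of x1] DERIV_cmult_right[OF DERIV_ident, of d1]] by simp
    have q: "((\<lambda>s. (x2 + s*d2)/(x1 + s*d1)) has_real_derivative
       (d2 * (x1 + s*d1) - (x2 + s*d2) * d1) / ((x1 + s*d1) * (x1 + s*d1))) (at s)"
      by (rule DERIV_divide[OF dY dX X'])
    have e: "\<And>X Y::real. X \<noteq> 0 \<Longrightarrow> inverse (1 + (Y/X)^2) * ((d2 * X - Y * d1) / (X * X)) = (X*d2 - Y*d1)/(X^2+Y^2)"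
    proof -
      fix X Y :: real assume "X \<noteq> 0"
      hence p: "X^2 + Y^2 \<noteq> 0" by (simp add: add_nonneg_eq_0_iff)
      show "inverse (1 + (Y/X)^2) * ((d2 * X - Y * d1) / (X * X)) = (X*d2 - Y*d1)/(X^2+Y^2)"
      proof -
        have "1 + (Y/X)^2 = (X^2+Y^2)/X^2" using \<open>X \<noteq> 0\<close> by (simp add: field_simps power_divide)
        hence i: "inverse (1 + (Y/X)^2) = X^2/(X^2+Y^2)" by simp
        have "X^2/(X^2+Y^2) * ((d2 * X - Y * d1) / (X * X)) = (X*X) * (d2 * X - Y * d1) / ((X^2+Y^2) * (X*X))"
          by (simp add: power2_eq_square)
        also have "\<dots> = (d2 * X - Y * d1) / (X^2+Y^2)" using \<open>X \<noteq> 0\<close> by simp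
        finally show ?thesis using i by (simp add: mult.commute)
      qed
    qed
    show ?thesis
      by (rule DERIV_cong[OF DERIV_chain2[OF DERIV_arctan q]]) (rule e[OF X'])
  qed
qed

lemma seg_in:
  fixes a b :: complex and t \<epsilon> :: real
  assumes ha: "cmod a \<le> \<epsilon>" and hb: "cmod b \<le> \<epsilon>" and e1: "\<epsilon> < 1" and t0: "0 \<le> t" and t1: "t \<le> 1"
  shows "of_real (1-t) * exp a + of_real t * exp b \<in> exp ` cball 0 \<epsilon>"
proof -
  define p where "p = exp a"
  define q where "q = exp b"
  define x1 where "x1 = Re p"
  define x2 where "x2 = Im p"
  define d1 where "d1 = Re q - Re p"
  define d2 where "d2 = Im q - Im p"
  define X where "X = (\<lambda>s. x1 + s*d1)"
  define Y where "Y = (\<lambda>s. x2 + s*d2)"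
  define N where "N = (\<lambda>s. X s^2 + Y s^2)"
  define l where "l = (\<lambda>s. ln (N s)/2)"
  define \<phi> where "\<phi> = (\<lambda>s. arctan (Y s / X s))"
  define P where "P = (\<lambda>s. X s * d1 + Y s * d2)"
  define Q where "Q = (\<lambda>s. X s * d2 - Y s * d1)"
  define g where "g = (\<lambda>s. l s^2 + \<phi> s^2)"
  define G where "G = (\<lambda>s. l s * P s + \<phi> s * Q s)"
  define D where "D = d1^2 + d2^2"
  have Rp: "exp (-1) \<le> Re p" using Re_exp_ge[OF ha e1] by (simp add: p_def)
  have Rq: "exp (-1) \<le> Re q" using Re_exp_ge[OF hb e1] by (simp add: q_def)
  have hX: "exp (-1) \<le> X s" if "0 \<le> s" "s \<le> 1" for s
  proof -
    have "X s = (1-s) * Re p + s * Re q" by (simp add: X_def x1_def d1_def algebra_simps)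
    also have "\<dots> \<ge> (1-s) * exp (-1) + s * exp (-1)"
      using that Rp Rq by (intro add_mono mult_left_mono) auto
    finally show ?thesis by (simp add: algebra_simps)
  qed
  have Xpos: "0 < X s" if "0 \<le> s" "s \<le> 1" for s
    using hX[OF that] by (rule less_le_trans[OF exp_gt_zero])
  have Npos: "0 < N s" if "0 \<le> s" "s \<le> 1" for s
    using Xpos[OF that] by (simp add: N_def add_pos_nonneg)
  have lge: "-1 \<le> l s" if "0 \<le> s" "s \<le> 1" for s
  proof -
    have "exp (-1) ^ 2 \<le> X s ^ 2" using hX[OF that] by (simp add: power_mono)
    also have "\<dots> \<le> N s" by (simp add: N_def)
    finally have "exp (-2) \<le> N s" by (simp add: power2_eq_square exp_add[symmetric])
    hence "ln (exp (-2)) \<le> ln (N s)" using Npos[OF that] by (subst ln_le_cancel_iff) auto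
    thus ?thesis by (simp add: l_def)
  qed
  have dl: "(l has_real_derivative P s / N s) (at s)" if "0 \<le> s" "s \<le> 1" for s
    using derivs(1)[of x1 s d1 x2 d2] Xpos[OF that]
    unfolding l_def N_def X_def Y_def P_def by simp
  have dphi: "(\<phi> has_real_derivative Q s / N s) (at s)" if "0 \<le> s" "s \<le> 1" for s
    using derivs(2)[of x1 s d1 x2 d2] Xpos[OF that]
    unfolding \<phi>_def N_def X_def Y_def Q_def by simp
  have dP: "(P has_real_derivative D) (at s)" for s
    unfolding P_def X_def Y_def D_def
    by (rule derivative_eq_intros refl)+ (simp add: power2_eq_square)
  have dQ: "(Q has_real_derivative 0) (at s)" for s
    unfolding Q_def X_def Y_def
    by (rule derivative_eq_intros refl)+ (simp add: algebra_simps)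
  have PQ: "P s ^ 2 + Q s ^ 2 = D * N s" for s
    by (simp add: P_def Q_def D_def N_def power2_eq_square algebra_simps)
  have dg: "(g has_real_derivative 2 * G s / N s) (at s)" if "0 \<le> s" "s \<le> 1" for s
  proof -
    have "(g has_real_derivative 2 * l s * (P s / N s) + 2 * \<phi> s * (Q s / N s)) (at s)"
      unfolding g_def
      by (rule derivative_eq_intros dl[OF that] dphi[OF that] refl)+ (simp add: mult_ac)
    moreover have "2 * l s * (P s / N s) + 2 * \<phi> s * (Q s / N s) = 2 * G s / N s"
      unfolding G_def by (simp add: add_divide_distrib distrib_left)
    ultimately show ?thesis by simp
  qed
  have dG: "(G has_real_derivative D * (1 + l s)) (at s)" if "0 \<le> s" "s \<le> 1" for s
  proof -
    have "(G has_real_derivative P s / N s * P s + l s * D + (Q s / N s * Q s + \<phi> s * 0)) (at s)"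
      unfolding G_def
      by (rule derivative_eq_intros dl[OF that] dphi[OF that] dP dQ refl)+ (simp add: mult.commute)
    moreover have "P s / N s * P s + l s * D + (Q s / N s * Q s + \<phi> s * 0) = D * (1 + l s)"
    proof -
      have "P s / N s * P s + Q s / N s * Q s = (P s^2 + Q s^2) / N s"
        by (simp add: power2_eq_square add_divide_distrib)
      also have "\<dots> = D" using PQ[of s] Npos[OF that] by simp
      finally show ?thesis by (simp add: algebra_simps)
    qed
    ultimately show ?thesis by simp
  qed
  have D0: "0 \<le> D" by (simp add: D_def)
  have Gmono: "G u \<le> G v" if "0 \<le> u" "u \<le> v" "v \<le> 1" for u v
  proof (rule DERIV_nonneg_imp_nondecreasing[OF \<open>u \<le> v\<close>])
    fix x assume x: "u \<le> x" "x \<le> v"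
    hence x01: "0 \<le> x" "x \<le> 1" using that by auto
    have "0 \<le> D * (1 + l x)" using lge[OF x01] D0 by simp
    with dG[OF x01] show "\<exists>y. (G has_real_derivative y) (at x) \<and> 0 \<le> y" by blast
  qed
  have gt: "g t \<le> max (g 0) (g 1)"
  proof (cases "G t \<le> 0")
    case True
    have "(\<lambda>s. - g s) 0 \<le> (\<lambda>s. - g s) t"
    proof (rule DERIV_nonneg_imp_nondecreasing[OF t0])
      fix s assume s: "0 \<le> s" "s \<le> t"
      have "G s \<le> 0" using Gmono[of s t] s t1 True by linarith
      hence "0 \<le> - (2 * G s / N s)" using Npos[of s] s t1 by (simp add: divide_nonpos_pos)
      moreover have "((\<lambda>s. - g s) has_real_derivative - (2 * G s / N s)) (at s)"
        using dg[of s] s t1 by (auto intro!: derivative_eq_intros)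
      ultimately show "\<exists>y. ((\<lambda>s. - g s) has_real_derivative y) (at s) \<and> 0 \<le> y" by blast
    qed
    thus ?thesis by simp
  next
    case False
    have "g t \<le> g 1"
    proof (rule DERIV_nonneg_imp_nondecreasing[OF t1])
      fix s assume s: "t \<le> s" "s \<le> 1"
      have "0 \<le> G s" using Gmono[of t s] s t0 False by linarith
      hence "0 \<le> 2 * G s / N s" using Npos[of s] s t0 by simp
      with dg[of s] s t0 show "\<exists>y. (g has_real_derivative y) (at s) \<and> 0 \<le> y" by auto
    qed
    thus ?thesis by simp
  qed
  have Im_small: "\<bar>Im z\<bar> < pi/2" if "cmod z \<le> \<epsilon>" for z :: complex
    using abs_Im_le_cmod[of z] that e1 pi_gt3 by linarith
  have gend: "g 0 = (cmod a)^2" "g 1 = (cmod b)^2"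
  proof -
    have key: "g s = (cmod c)^2" if "X s = Re (exp c)" "Y s = Im (exp c)" "cmod c \<le> \<epsilon>" for s c
    proof -
      have ne: "exp c \<noteq> 0" by simp
      have Rpos: "0 < Re (exp c)" using Re_exp_ge[OF that(3) e1] by (rule less_le_trans[OF exp_gt_zero])
      have "N s = (cmod (exp c))^2" by (simp add: N_def that cmod_power2 del: norm_exp_eq_Re)
      hence "l s = ln (cmod (exp c))" by (simp add: l_def ln_sqrt[symmetric] del: norm_exp_eq_Re)
      hence l: "l s = Re c" by simp
      have "\<phi> s = Arg (exp c)" using arg_conv_arctan[OF Rpos] by (simp add: \<phi>_def that)
      also have "\<dots> = Im (Ln (exp c))" by (rule Arg_eq_Im_Ln[OF ne])
      also have "\<dots> = Im c" using Im_small[OF that(3)] by (subst Ln_exp) auto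
      finally show ?thesis using l by (simp add: g_def cmod_power2)
    qed
    show "g 0 = (cmod a)^2" by (rule key) (auto simp: X_def Y_def x1_def x2_def p_def ha)
    show "g 1 = (cmod b)^2" by (rule key) (auto simp: X_def Y_def x1_def x2_def d1_def d2_def p_def q_def hb)
  qed
  have e0: "0 \<le> \<epsilon>" using ha norm_ge_zero[of a] by linarith
  have gle: "g t \<le> \<epsilon>^2"
  proof -
    have "(cmod a)^2 \<le> \<epsilon>^2" "(cmod b)^2 \<le> \<epsilon>^2" using ha hb by (auto intro: power_mono)
    thus ?thesis using gt gend by linarith
  qed
  define w where "w = of_real (1-t) * p + of_real t * q"
  have Rew: "Re w = X t" by (simp add: w_def X_def x1_def d1_def algebra_simps)
  have Imw: "Im w = Y t" by (simp add: w_def Y_def x2_def d2_def algebra_simps)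
  have Rwpos: "0 < Re w" using Rew Xpos[OF t0 t1] by simp
  hence wne: "w \<noteq> 0" by auto
  have "(cmod (Ln w))^2 = g t"
  proof -
    have "N t = (cmod w)^2" by (simp add: N_def Rew[symmetric] Imw[symmetric] cmod_power2)
    hence "Re (Ln w) = l t" using wne by (simp add: l_def ln_sqrt[symmetric])
    moreover have "Im (Ln w) = \<phi> t"
      using arg_conv_arctan[OF Rwpos] Arg_eq_Im_Ln[OF wne] by (simp add: \<phi>_def Rew Imw)
    ultimately show ?thesis by (simp add: g_def cmod_power2)
  qed
  with gle have "(cmod (Ln w))^2 \<le> \<epsilon>^2" by simp
  hence "cmod (Ln w) \<le> \<epsilon>" using e0 by (simp add: power2_le_iff_abs_le)
  moreover have "exp (Ln w) = w" using wne by simp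
  ultimately have "w \<in> exp ` cball 0 \<epsilon>" by (metis image_eqI mem_cball_0)
  thus ?thesis by (simp only: w_def p_def q_def)
qed


lemma expDisc_convex:
  assumes "x \<in> expDisc \<epsilon>" "y \<in> expDisc \<epsilon>" "\<epsilon> < 1" "0 \<le> u" "0 \<le> v" "u + v = 1"
  shows "of_real u * x + of_real v * y \<in> expDisc \<epsilon>"
proof -
  obtain a where a: "x = exp a" "cmod a \<le> \<epsilon>" using assms(1) by (auto simp: expDisc_def)
  obtain b where b: "y = exp b" "cmod b \<le> \<epsilon>" using assms(2) by (auto simp: expDisc_def)
  have u: "u = 1 - v" using assms(6) by simp
  have "of_real (1-v) * exp a + of_real v * exp b \<in> exp ` cball 0 \<epsilon>"
    by (rule seg_in[OF a(2) b(2) assms(3) assms(5)]) (use assms in linarith)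
  thus ?thesis using a b u by (simp add: expDisc_def)
qed

theorem lemma3p5:
  fixes m :: nat and \<epsilon> :: real
  assumes "0 < m" and "0 < \<epsilon>" and "\<epsilon> < 1"
  shows "convex_Cm (E_set m \<epsilon>)"
  unfolding convex_Cm_def
proof (intro ballI allI impI)
  fix x y :: "nat \<Rightarrow> complex" and u v :: real
  assume x: "x \<in> E_set m \<epsilon>" and y: "y \<in> E_set m \<epsilon>" and u: "0 \<le> u" and v: "0 \<le> v" and uv: "u + v = 1"
  define z where "z = (\<lambda>j. of_real u * x j + of_real v * y j)"
  have "\<forall>j\<ge>m. z j = 0" using x y by (simp add: E_set_def z_def)
  moreover have "\<forall>j<m. z j \<in> expDisc \<epsilon>"
    using x y expDisc_convex[OF _ _ assms(3) u v uv] by (simp add: E_set_def z_def)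
  moreover have "\<forall>j<m. (z ((j+1) mod m) * xi m (j+1) - z j * xi m j) / (xi m (j+1) - xi m j) \<in> expDisc \<epsilon>"
  proof (intro allI impI)
    fix j assume j: "j < m"
    define L where "L = (\<lambda>r::nat\<Rightarrow>complex. (r ((j+1) mod m) * xi m (j+1) - r j * xi m j) / (xi m (j+1) - xi m j))"
    have "L z = of_real u * L x + of_real v * L y"
      by (simp add: L_def z_def diff_divide_distrib add_divide_distrib algebra_simps)
    moreover have "L x \<in> expDisc \<epsilon>" "L y \<in> expDisc \<epsilon>" using x y j by (auto simp: E_set_def L_def)
    ultimately have "L z \<in> expDisc \<epsilon>" using expDisc_convex[OF _ _ assms(3) u v uv] by simp
    thus "(z ((j+1) mod m) * xi m (j+1) - z j * xi m j) / (xi m (j+1) - xi m j) \<in> expDisc \<epsilon>"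
      by (simp add: L_def)
  qed
  ultimately show "(\<lambda>j. of_real u * x j + of_real v * y j) \<in> E_set m \<epsilon>"
    unfolding E_set_def z_def by blast
qed

end
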